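(* Let $\mathbf{x}^0\in\mathbb{R}^K$ and $\mathbf{x}^\downarrow\in\mathbb{R}^K_+$ satisfy $x^0_k\le\bar x$ and $x^0_k-x^\downarrow_k\ge\underline x$ for all $k\in\mathcal{K}$. Then $$\max_{k\in\mathcal{K}}\overline{Y}_k-\max_{k\in\mathcal{K}}\underline{Y}_k\;\le\;(T-\Delta t)\,\Delta\eta\cdot\min\Big\{-\underline x,\;\bar x,\;\frac{\bar x-\underline x}{1+\eta^{c}\eta^{d}}\Big\}.$$ Here $\overline{Y}_k$ and $\underline{Y}_k$ are the maximum state-of-charge estimates defined in the context.
   Context: Let $K$ be a positive integer, $\Delta t>0$, $T=K\Delta t$, $\mathcal{K}=\{1,\dots,K\}$, $\underline x\le0\le\bar x$, $\eta^{c},\eta^{d}\in(0,1)$, $\Delta\eta=1/\eta^{d}-\eta^{c}$, $y_0\ge0$ and $\gamma\ge0$. For fixed market decisions $\mathbf{x}^0,\mathbf{x}^\downarrow$ and $k\in\mathcal{K}$, define the relaxation estimate $\underline{Y}_k$ as the minimum of $y_0+\gamma\bar\lambda_k+\Delta t\sum_{l=1}^k\bar\Lambda_{kl}$. The minimum is taken over $\bar\lambda_k\ge0$, $\bar{\boldsymbol\Lambda}_k\in\mathbb{R}^k$ and $\upsilon_{1l},\upsilon_{2l}\in\{0,1\}$ ($l\le K-1$), subject to: - $\bar\Lambda_{kk}\ge-\eta^{c}x^0_k$, $\bar\Lambda_{kk}\ge\eta^{c}(x^\downarrow_k-x^0_k)-\bar\lambda_k$ and $\bar\Lambda_{kk}\ge0$;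 - for $l\le K-1$: $(1-\upsilon_{1l})\underline x\le x^0_l-x^\downarrow_l\le\upsilon_{1l}\bar x$ and $\upsilon_{2l}\underline x\le x^0_l\le(1-\upsilon_{2l})\bar x$; - for $l<k$: - $\bar\Lambda_{kl}\ge\frac{x^\downarrow_l-x^0_l}{\eta^{d}}-\bar\lambda_k+(1-\upsilon_{1l})\Delta\eta\,\underline x$, - $\bar\Lambda_{kl}\ge-\frac{x^0_l}{\eta^{d}}+\upsilon_{2l}\Delta\eta\,\underline x$, - $\bar\Lambda_{kl}\ge\eta^{c}(x^\downarrow_l-x^0_l)-\bar\lambda_k-\upsilon_{1l}\Delta\eta\,\bar x$, - $\bar\Lambda_{kl}\ge-\eta^{c}x^0_l-(1-\upsilon_{2l})\Delta\eta\,\bar x$. Define the restriction estimate $\overline{Y}_k$ as the same minimum, with additional binaries $\upsilon_{3l}\in\{0,1\}$ ($l\le K-1$) and additional constraints: - for $l\le K-1$: $x^\downarrow_l-(1-\eta^{c}\eta^{d})x^0_l-\eta^{d}\bar\lambda_k\ge-((2-\eta^{c}\eta^{d})\bar x-\underline x)(1-\upsilon_{3l})$; - for $l\le K-1$: $x^\downarrow_l-(1-\eta^{c}\eta^{d})x^0_l-\eta^{d}\bar\lambda_k\le\upsilon_{3l}(\eta^{c}\eta^{d}\bar x-\underline x)$; - for $l<k$: $\bar\Lambda_{kl}\ge-\eta^{c}x^0_l-(\upsilon_{1l}+1-\upsilon_{3l})\Delta\eta\,\bar x$; - for $l<k$: $\bar\Lambda_{kl}\ge\frac{x^\downarrow_l-x^0_l}{\eta^{d}}-\bar\lambda_k+(\upsilon_{2l}+\upsilon_{3l})\Delta\eta\,\underline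 x$. These are the maximum states of charge implied by the mixed-integer linear relaxation and restriction, respectively, of the exact upper state-of-charge constraint. The exact constraint includes the bilinear constraint $\bar\Lambda_{kl}x^\downarrow_l+\bar\lambda_kx^0_l\ge\upsilon_{2l}\frac{\underline x(\bar x-\underline x)}{\eta^{d}}-\upsilon_{1l}\frac{\bar x^2}{4\eta^{d}}$; the relaxation omits it, and the restriction replaces it by the constraints above. *)

theory Defs
  imports Complex_Main
begin

text \<open>Vectors in R^K are functions nat => real, indexed by 1..K.
  Binary variables are real-valued functions restricted to {0,1} on 1..K-1.\<close>

definition delta_eta :: "real \<Rightarrow> real \<Rightarrow> real" where
  "delta_eta etac etad = 1 / etad - etac"

definition relax_feas ::
  "nat \<Rightarrow> real \<Rightarrow> real \<Rightarrow> real \<Rightarrow> real \<Rightarrow> (nat \<Rightarrow> real) \<Rightarrow> (nat \<Rightarrow> real) \<Rightarrow> nat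
   \<Rightarrow> real \<Rightarrow> (nat \<Rightarrow> real) \<Rightarrow> (nat \<Rightarrow> real) \<Rightarrow> (nat \<Rightarrow> real) \<Rightarrow> bool" where
  "relax_feas K xlo xhi etac etad x0 xd k lam Lam u1 u2 \<longleftrightarrow>
     (let de = delta_eta etac etad in
     lam \<ge> 0 \<and>
     Lam k \<ge> - etac * x0 k \<and> Lam k \<ge> etac * (xd k - x0 k) - lam \<and> Lam k \<ge> 0 \<and>
     (\<forall>l\<in>{1..K-1}. u1 l \<in> {0,1} \<and> u2 l \<in> {0,1} \<and>
        (1 - u1 l) * xlo \<le> x0 l - xd l \<and> x0 l - xd l \<le> u1 l * xhi \<and>
        u2 l * xlo \<le> x0 l \<and> x0 l \<le> (1 - u2 l) * xhi) \<and>
     (\<forall>l\<in>{1..<k}.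
        Lam l \<ge> (xd l - x0 l) / etad - lam + (1 - u1 l) * de * xlo \<and>
        Lam l \<ge> - x0 l / etad + u2 l * de * xlo \<and>
        Lam l \<ge> etac * (xd l - x0 l) - lam - u1 l * de * xhi \<and>
        Lam l \<ge> - etac * x0 l - (1 - u2 l) * de * xhi))"

definition restr_feas ::
  "nat \<Rightarrow> real \<Rightarrow> real \<Rightarrow> real \<Rightarrow> real \<Rightarrow> (nat \<Rightarrow> real) \<Rightarrow> (nat \<Rightarrow> real) \<Rightarrow> nat
   \<Rightarrow> real \<Rightarrow> (nat \<Rightarrow> real) \<Rightarrow> (nat \<Rightarrow> real) \<Rightarrow> (nat \<Rightarrow> real) \<Rightarrow> (nat \<Rightarrow> real) \<Rightarrow> bool" where
  "restr_feas K xlo xhi etac etad x0 xd k lam Lam u1 u2 u3 \<longleftrightarrow>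
     (let de = delta_eta etac etad in
     relax_feas K xlo xhi etac etad x0 xd k lam Lam u1 u2 \<and>
     (\<forall>l\<in>{1..K-1}. u3 l \<in> {0,1} \<and>
        xd l - (1 - etac * etad) * x0 l - etad * lam
          \<ge> - ((2 - etac * etad) * xhi - xlo) * (1 - u3 l) \<and>
        xd l - (1 - etac * etad) * x0 l - etad * lam
          \<le> u3 l * (etac * etad * xhi - xlo)) \<and>
     (\<forall>l\<in>{1..<k}.
        Lam l \<ge> - etac * x0 l - (u1 l + 1 - u3 l) * de * xhi \<and>
        Lam l \<ge> (xd l - x0 l) / etad - lam + (u2 l + u3 l) * de * xlo))"

definition soc_obj :: "real \<Rightarrow> real \<Rightarrow> real \<Rightarrow> nat \<Rightarrow> real \<Rightarrow> (nat \<Rightarrow> real) \<Rightarrow> real" where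
  "soc_obj dt y0 gamma k lam Lam = y0 + gamma * lam + dt * (\<Sum>l=1..k. Lam l)"

text \<open>Relaxation estimate (underline Y_k): minimum of the objective over the relaxation.\<close>
definition Y_relax ::
  "nat \<Rightarrow> real \<Rightarrow> real \<Rightarrow> real \<Rightarrow> real \<Rightarrow> real \<Rightarrow> real \<Rightarrow> real
   \<Rightarrow> (nat \<Rightarrow> real) \<Rightarrow> (nat \<Rightarrow> real) \<Rightarrow> nat \<Rightarrow> real" where
  "Y_relax K dt xlo xhi etac etad y0 gamma x0 xd k =
     Inf {soc_obj dt y0 gamma k lam Lam | lam Lam u1 u2.
            relax_feas K xlo xhi etac etad x0 xd k lam Lam u1 u2}"

text \<open>Restriction estimate (overline Y_k): minimum of the objective over the restriction.\<close>
definition Y_restr ::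
  "nat \<Rightarrow> real \<Rightarrow> real \<Rightarrow> real \<Rightarrow> real \<Rightarrow> real \<Rightarrow> real \<Rightarrow> real
   \<Rightarrow> (nat \<Rightarrow> real) \<Rightarrow> (nat \<Rightarrow> real) \<Rightarrow> nat \<Rightarrow> real" where
  "Y_restr K dt xlo xhi etac etad y0 gamma x0 xd k =
     Inf {soc_obj dt y0 gamma k lam Lam | lam Lam u1 u2 u3.
            restr_feas K xlo xhi etac etad x0 xd k lam Lam u1 u2 u3}"

end

theory Submission
  imports Defs
begin

lemma perl:
  fixes xlo xhi etac etad D m xz xd lam lam' L ua ub uc Lam :: real
  assumes a1: "xlo \<le> 0" "0 \<le> xhi" "0 < etac" "etac < 1" "0 < etad" "etad < 1"
    and hD: "D = 1/etad - etac"
    and hm: "m = xhi \<or> m = - xlo" "0 \<le> m" "m \<le> xhi" "m \<le> -xlo"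
    and hx: "0 \<le> xd" "xz \<le> xhi" "xlo \<le> xz - xd"
    and hu1: "ua \<in> {0,1}" and hu2: "ub \<in> {0,1}"
    and hc: "(1 - ua) * xlo \<le> xz - xd" "xz - xd \<le> ua * xhi" "ub * xlo \<le> xz" "xz \<le> (1 - ub) * xhi"
    and hL: "L = (xhi - xlo)/etad" and hl': "lam' = min lam L" and hlam: "0 \<le> lam"
    and c1: "Lam \<ge> (xd - xz) / etad - lam + (1 - ua) * D * xlo"
    and c2: "Lam \<ge> - xz / etad + ub * D * xlo"
    and c3: "Lam \<ge> etac * (xd - xz) - lam - ua * D * xhi"
    and c4: "Lam \<ge> - etac * xz - (1 - ub) * D * xhi"
    and hu3: "uc = (if xd - (1 - etac*etad)*xz - etad*lam' \<ge> 0 then 1 else 0)"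
  shows "Lam + D*m \<ge> (xd - xz) / etad - lam' + (1 - ua) * D * xlo \<and>
        Lam + D*m \<ge> - xz / etad + ub * D * xlo \<and>
        Lam + D*m \<ge> etac * (xd - xz) - lam' - ua * D * xhi \<and>
        Lam + D*m \<ge> - etac * xz - (1 - ub) * D * xhi \<and>
        Lam + D*m \<ge> - etac * xz - (ua + 1 - uc) * D * xhi \<and>
        Lam + D*m \<ge> (xd - xz) / etad - lam' + (ub + uc) * D * xlo"
proof -
  have "1/etad > 1" using a1 by simp
  then have Dpos: "D > 0" using a1 hD by linarith
  have Dxlo: "D*xlo = xlo/etad - etac*xlo" unfolding hD by (simp add: algebra_simps)
  have Dxlo0: "D*xlo \<le> 0" using Dpos a1 by (simp add: mult_nonneg_nonpos)
  have Dxhi0: "D*xhi \<ge> 0" using Dpos a1 by simp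
  have Dm0: "D*m \<ge> 0" using Dpos hm by simp
  have Dm: "D*m = D*xhi \<or> D*m = - (D*xlo)" using hm(1) by auto
  have dv: "(xd - xz)/etad = xd/etad - xz/etad" by (simp add: diff_divide_distrib)
  have Le: "L = xhi/etad - xlo/etad" using hL by (simp add: diff_divide_distrib)
  have q1: "xz/etad \<le> xhi/etad" using hx a1 by (simp add: divide_right_mono)
  have q2: "xlo/etad \<le> xz/etad - xd/etad" using hx a1 divide_right_mono[of xlo "xz-xd" etad]
    by (simp add: diff_divide_distrib)
  have q3: "etac*(xd - xz) \<le> - (etac*xlo)" using hx a1 mult_left_mono[of xlo "xz-xd" etac]
    by (simp add: algebra_simps)
  have q4: "etac*xz \<le> etac*xhi" using hx a1 by simp
  have Aeq: "xd - (1 - etac*etad)*xz - etad*lam' = etad * (xd/etad - xz/etad + etac*xz - lam')"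
    using a1 by (simp add: field_simps)
  have Asgn: "(xd - (1 - etac*etad)*xz - etad*lam' \<ge> 0) = (xd/etad - xz/etad + etac*xz - lam' \<ge> 0)"
    using Aeq a1 by (simp add: zero_le_mult_iff)
  have lcase: "lam' = lam \<or> (lam' = L \<and> L < lam)" using hl' by auto
  have u3c: "(uc = 1 \<and> xd/etad - xz/etad + etac*xz - lam' \<ge> 0) \<or> (uc = 0 \<and> xd/etad - xz/etad + etac*xz - lam' < 0)"
    using hu3 Asgn by auto
  have xh0: "xhi/etad \<ge> 0" using a1 by simp
  have hB: "Lam \<ge> - xhi/etad"
  proof -
    from hu2 have "ub = 0 \<or> ub = 1" by auto
    then show ?thesis
    proof
      assume "ub = 0" then show ?thesis using c2 q1 by simp
    next
      assume u: "ub = 1" then have "xz \<le> 0" using hc by simp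
      then have "etac * xz \<le> 0" using a1 by (simp add: mult_nonneg_nonpos)
      then show ?thesis using c4 u xh0 by simp
    qed
  qed
  have two: "(2::real) - 1 = 1" by simp
  note F = hB xh0 c1 c2 c3 c4 Dm0 Dxlo Dxlo0 Dxhi0 dv Le q1 q2 q3 q4
  from hu1 hu2 u3c lcase Dm show ?thesis
    apply -
    apply (insert F, elim insertE emptyE disjE conjE; hypsubst?; intro conjI; (simp only: mult_zero_left mult_1_left diff_zero diff_self add_0 add_0_right cancel_comm_monoid_add_class.diff_cancel one_add_one two)?; linarith?)
    done
qed

lemma u3feas:
  fixes xlo xhi etac etad x0 xd lam' u3 :: real
  assumes a1: "xlo \<le> 0" "0 \<le> xhi" "0 < etac" "etac < 1" "0 < etad" "etad < 1"
    and hx: "0 \<le> xd" "x0 \<le> xhi" "xlo \<le> x0 - xd"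
    and hl: "0 \<le> lam'" "lam' \<le> (xhi - xlo)/etad"
    and hu3: "u3 = (if xd - (1 - etac*etad)*x0 - etad*lam' \<ge> 0 then 1 else 0)"
  shows "u3 \<in> {0,1} \<and>
        xd - (1 - etac * etad) * x0 - etad * lam'
          \<ge> - ((2 - etac * etad) * xhi - xlo) * (1 - u3) \<and>
        xd - (1 - etac * etad) * x0 - etad * lam'
          \<le> u3 * (etac * etad * xhi - xlo)"
proof -
  have c0: "0 < etac*etad" "etac*etad < 1" using a1
    by (simp, metis mult_strict_mono' less_eq_real_def mult_1_right a1(5) a1(6))
  have e1: "etad*lam' \<le> xhi - xlo" using hl a1 by (simp add: field_simps)
  have e2: "etad*lam' \<ge> 0" using hl a1 by simp
  have e3: "(1 - etac*etad)*x0 \<le> (1 - etac*etad)*xhi" using c0 hx by (simp add: mult_left_mono)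
  have e4: "etac*etad*x0 \<le> etac*etad*xhi" using c0 hx by (simp add: mult_left_mono)
  show ?thesis
  proof (cases "xd - (1 - etac*etad)*x0 - etad*lam' \<ge> 0")
    case True
    then show ?thesis using hu3 e2 e4 hx by (simp add: algebra_simps)
  next
    case False
    then show ?thesis using hu3 e1 e3 hx by (simp add: algebra_simps)
  qed
qed

lemma kterm:
  fixes xlo xhi etac etad x0 xd :: real
  assumes a1: "xlo \<le> 0" "0 \<le> xhi" "0 < etac" "etac < 1" "0 < etad" "etad < 1"
    and hx: "xlo \<le> x0 - xd"
  shows "etac * (xd - x0) - (xhi - xlo)/etad \<le> 0"
proof -
  have q3: "etac*(xd - x0) \<le> - (etac*xlo)" using hx a1 mult_left_mono[of xlo "x0-xd" etac]
    by (simp add: algebra_simps)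
  have q5: "- (etac*xlo) \<le> - xlo" using a1 by (simp add: mult_le_cancel_right1)
  have q6: "xhi - xlo \<le> (xhi - xlo)/etad" using a1 mult_left_le[of etad "xhi - xlo"] by (simp add: le_divide_eq)
  show ?thesis using q3 q5 q6 a1 by linarith
qed

lemma mfacts:
  fixes xlo xhi etac etad m :: real
  assumes a1: "xlo \<le> 0" "0 \<le> xhi" "0 < etac" "etac < 1" "0 < etad" "etad < 1"
    and hm: "m = min (- xlo) (min xhi ((xhi - xlo) / (1 + etac * etad)))"
  shows "(m = xhi \<or> m = - xlo) \<and> 0 \<le> m \<and> m \<le> xhi \<and> m \<le> - xlo"
proof -
  have c1: "etac*etad < 1" using a1 by (metis mult_strict_mono' less_eq_real_def mult_1_right)
  have c0: "0 < etac*etad" using a1 by simp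
  have "(xhi - xlo)/2 \<le> (xhi - xlo) / (1 + etac * etad)"
  proof (rule divide_left_mono)
    show "1 + etac * etad \<le> 2" using c1 by simp
    show "0 \<le> xhi - xlo" using a1 by simp
    show "0 < 2 * (1 + etac * etad)" using c0 by simp
  qed
  moreover have "min xhi (-xlo) \<le> (xhi - xlo)/2" by simp
  ultimately have "min (- xlo) (min xhi ((xhi - xlo) / (1 + etac * etad))) = min (-xlo) xhi"
    by linarith
  then show ?thesis using hm a1 by auto
qed

lemma step:
  fixes K k :: nat and dt xlo xhi etac etad yy gamma lam m :: real
    and x0 xd Lam u1 u2 :: "nat \<Rightarrow> real"
  assumes a1: "xlo \<le> 0" "0 \<le> xhi" "0 < etac" "etac < 1" "0 < etad" "etad < 1"
    and dt: "dt > 0" and ga: "gamma \<ge> 0"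
    and hxd: "\<forall>k\<in>{1..K}. xd k \<ge> 0"
    and hx: "\<forall>k\<in>{1..K}. x0 k \<le> xhi \<and> x0 k - xd k \<ge> xlo"
    and k: "k \<in> {1..K}"
    and rf: "relax_feas K xlo xhi etac etad x0 xd k lam Lam u1 u2"
    and hm: "m = min (- xlo) (min xhi ((xhi - xlo) / (1 + etac * etad)))"
  shows "\<exists>lam' Lam' u3. restr_feas K xlo xhi etac etad x0 xd k lam' Lam' u1 u2 u3 \<and>
     soc_obj dt yy gamma k lam' Lam' \<le> soc_obj dt yy gamma k lam Lam
        + (real K * dt - dt) * delta_eta etac etad * m"
proof -
  define D where "D = delta_eta etac etad"
  define L where "L = (xhi - xlo)/etad"
  define lam' where "lam' = min lam L"
  define Lam' where "Lam' = (\<lambda>l. if l < k then Lam l + D*m else Lam l)"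
  define u3 where "u3 = (\<lambda>l. if xd l - (1 - etac*etad)*x0 l - etad*lam' \<ge> 0 then 1 else (0::real))"
  have mf: "(m = xhi \<or> m = - xlo) \<and> 0 \<le> m \<and> m \<le> xhi \<and> m \<le> - xlo"
    using mfacts[OF a1 hm] .
  have hD: "D = 1/etad - etac" unfolding D_def delta_eta_def ..
  have "1/etad > 1" using a1 by simp
  then have Dpos: "D > 0" using a1 hD by linarith
  have L0: "L \<ge> 0" unfolding L_def using a1 by simp
  from rf have lam0: "lam \<ge> 0" unfolding relax_feas_def Let_def by simp
  have l'0: "0 \<le> lam'" "lam' \<le> L" "lam' \<le> lam" using lam0 L0 unfolding lam'_def by auto
  have kK: "1 \<le> k" "k \<le> K" using k by auto
  from rf have R: "Lam k \<ge> - etac * x0 k" "Lam k \<ge> etac * (xd k - x0 k) - lam" "Lam k \<ge> 0"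
    "\<forall>l\<in>{1..K-1}. u1 l \<in> {0,1} \<and> u2 l \<in> {0,1} \<and>
        (1 - u1 l) * xlo \<le> x0 l - xd l \<and> x0 l - xd l \<le> u1 l * xhi \<and>
        u2 l * xlo \<le> x0 l \<and> x0 l \<le> (1 - u2 l) * xhi"
    "\<forall>l\<in>{1..<k}.
        Lam l \<ge> (xd l - x0 l) / etad - lam + (1 - u1 l) * D * xlo \<and>
        Lam l \<ge> - x0 l / etad + u2 l * D * xlo \<and>
        Lam l \<ge> etac * (xd l - x0 l) - lam - u1 l * D * xhi \<and>
        Lam l \<ge> - etac * x0 l - (1 - u2 l) * D * xhi"
    unfolding relax_feas_def Let_def D_def by auto
  have PL: "Lam l + D*m \<ge> (xd l - x0 l) / etad - lam' + (1 - u1 l) * D * xlo \<and>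
        Lam l + D*m \<ge> - x0 l / etad + u2 l * D * xlo \<and>
        Lam l + D*m \<ge> etac * (xd l - x0 l) - lam' - u1 l * D * xhi \<and>
        Lam l + D*m \<ge> - etac * x0 l - (1 - u2 l) * D * xhi \<and>
        Lam l + D*m \<ge> - etac * x0 l - (u1 l + 1 - u3 l) * D * xhi \<and>
        Lam l + D*m \<ge> (xd l - x0 l) / etad - lam' + (u2 l + u3 l) * D * xlo"
    if l: "l \<in> {1..<k}" for l
  proof -
    have l1: "l \<in> {1..K-1}" "l \<in> {1..K}" using l kK by auto
    show ?thesis
      by (rule perl[where xd="xd l" and xz="x0 l" and ua="u1 l" and ub="u2 l" and uc="u3 l" and Lam="Lam l" and lam=lam and lam'=lam' and L=L and D=D and m=m])
        (insert a1 hD mf hxd hx l1 R(4) R(5) l L_def lam'_def lam0 u3_def, auto)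
  qed
  have U3: "u3 l \<in> {0,1} \<and>
        xd l - (1 - etac * etad) * x0 l - etad * lam'
          \<ge> - ((2 - etac * etad) * xhi - xlo) * (1 - u3 l) \<and>
        xd l - (1 - etac * etad) * x0 l - etad * lam'
          \<le> u3 l * (etac * etad * xhi - xlo)" if l: "l \<in> {1..K-1}" for l
  proof -
    have l1: "l \<in> {1..K}" using l by auto
    show ?thesis
      by (rule u3feas[OF a1]) (insert hxd hx l1 l'0 L_def u3_def, auto)
  qed
  have Lk: "Lam k \<ge> etac * (xd k - x0 k) - lam'"
  proof (cases "lam' = lam")
    case True then show ?thesis using R by simp
  next
    case False
    then have "lam' = L" unfolding lam'_def by auto
    moreover have "etac * (xd k - x0 k) - L \<le> 0" unfolding L_def
      using kterm[OF a1] hx k by auto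
    ultimately show ?thesis using R by simp
  qed
  have feas: "restr_feas K xlo xhi etac etad x0 xd k lam' Lam' u1 u2 u3"
    unfolding restr_feas_def relax_feas_def Let_def D_def[symmetric]
    using l'0 R Lk PL U3 unfolding Lam'_def by auto
  have sumeq: "(\<Sum>l=1..k. Lam' l) = (\<Sum>l=1..k. Lam l) + (real k - 1) * (D*m)"
  proof -
    have e: "{1..k} = insert k {1..<k}" using kK by auto
    have "(\<Sum>l=1..k. Lam' l) = Lam k + (\<Sum>l\<in>{1..<k}. Lam l + D*m)"
      unfolding e Lam'_def by (simp add: sum.insert)
    also have "\<dots> = Lam k + (\<Sum>l\<in>{1..<k}. Lam l) + (real k - 1) * (D*m)"
      using kK by (simp add: sum.distrib of_nat_diff)
    also have "\<dots> = (\<Sum>l=1..k. Lam l) + (real k - 1) * (D*m)"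
      unfolding e by (simp add: sum.insert)
    finally show ?thesis .
  qed
  have Dm0: "D*m \<ge> 0" using Dpos mf by simp
  have kk: "(real k - 1) * (D*m) \<le> (real K - 1) * (D*m)" using kK Dm0
    by (intro mult_right_mono) auto
  have "dt * ((real k - 1) * (D*m)) \<le> dt * ((real K - 1) * (D*m))"
    using kk dt by (intro mult_left_mono) auto
  moreover have "gamma * lam' \<le> gamma * lam" using ga l'0 by (intro mult_left_mono) auto
  ultimately have "soc_obj dt yy gamma k lam' Lam' \<le> soc_obj dt yy gamma k lam Lam
        + (real K * dt - dt) * delta_eta etac etad * m"
    unfolding soc_obj_def sumeq D_def by (simp add: algebra_simps)
  with feas show ?thesis by blast
qed

lemma relax_nonempty:
  fixes K k :: nat and xlo xhi etac etad :: real and x0 xd :: "nat \<Rightarrow> real"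
  assumes a1: "xlo \<le> 0" "0 \<le> xhi"
    and hxd: "\<forall>k\<in>{1..K}. xd k \<ge> 0"
    and hx: "\<forall>k\<in>{1..K}. x0 k \<le> xhi \<and> x0 k - xd k \<ge> xlo"
  shows "\<exists>lam Lam u1 u2. relax_feas K xlo xhi etac etad x0 xd k lam Lam u1 u2"
proof -
  define D where "D = delta_eta etac etad"
  define u1 where "u1 = (\<lambda>l. if x0 l - xd l \<ge> 0 then 1 else (0::real))"
  define u2 where "u2 = (\<lambda>l. if x0 l \<le> 0 then 1 else (0::real))"
  define Lam where "Lam = (\<lambda>l. if l = k then max (- etac * x0 k) (max (etac * (xd k - x0 k) - 0) 0)
     else max (max ((xd l - x0 l) / etad - 0 + (1 - u1 l) * D * xlo) (- x0 l / etad + u2 l * D * xlo))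
              (max (etac * (xd l - x0 l) - 0 - u1 l * D * xhi) (- etac * x0 l - (1 - u2 l) * D * xhi)))"
  have U: "u1 l \<in> {0,1} \<and> u2 l \<in> {0,1} \<and>
        (1 - u1 l) * xlo \<le> x0 l - xd l \<and> x0 l - xd l \<le> u1 l * xhi \<and>
        u2 l * xlo \<le> x0 l \<and> x0 l \<le> (1 - u2 l) * xhi" if l: "l \<in> {1..K-1}" for l
  proof -
    have "l \<in> {1..K}" using l by auto
    then have "xd l \<ge> 0" "x0 l \<le> xhi" "x0 l - xd l \<ge> xlo" using hxd hx by auto
    then show ?thesis unfolding u1_def u2_def using a1 by auto
  qed
  have "relax_feas K xlo xhi etac etad x0 xd k 0 Lam u1 u2"
    unfolding relax_feas_def Let_def D_def[symmetric]
    using U by (auto simp: Lam_def)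
  then show ?thesis by blast
qed

lemma restr_bdd:
  fixes K k :: nat and dt xlo xhi etac etad y0 gamma :: real and x0 xd :: "nat \<Rightarrow> real"
  assumes a1: "xlo \<le> 0" "0 \<le> xhi" "0 < etac" "etac < 1" "0 < etad" "etad < 1"
    and dt: "dt > 0" and ga: "gamma \<ge> 0"
    and hx: "\<forall>k\<in>{1..K}. x0 k \<le> xhi \<and> x0 k - xd k \<ge> xlo"
    and k: "k \<in> {1..K}"
  shows "bdd_below {soc_obj dt y0 gamma k lam Lam | lam Lam u1 u2 u3.
            restr_feas K xlo xhi etac etad x0 xd k lam Lam u1 u2 u3}"
proof -
  define D where "D = delta_eta etac etad"
  have hD: "D = 1/etad - etac" unfolding D_def delta_eta_def ..
  have "1/etad > 1" using a1 by simp
  then have Dpos: "D > 0" using a1 hD by linarith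
  have Dxlo: "D * xlo \<le> 0" using Dpos a1 by (simp add: mult_nonneg_nonpos)
  define B where "B = - xhi/etad + D*xlo"
  have xh: "xhi/etad \<ge> 0" using a1 by simp
  have B0: "B \<le> 0" unfolding B_def using Dxlo xh by linarith
  show ?thesis unfolding bdd_below_def
  proof (intro exI ballI)
    fix x assume "x \<in> {soc_obj dt y0 gamma k lam Lam | lam Lam u1 u2 u3.
            restr_feas K xlo xhi etac etad x0 xd k lam Lam u1 u2 u3}"
    then obtain lam Lam u1 u2 u3 where x: "x = soc_obj dt y0 gamma k lam Lam"
      and rf: "restr_feas K xlo xhi etac etad x0 xd k lam Lam u1 u2 u3" by blast
    from rf have R: "lam \<ge> 0" "Lam k \<ge> 0"
      "\<forall>l\<in>{1..K-1}. u2 l \<in> {0,1}"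
      "\<forall>l\<in>{1..<k}. Lam l \<ge> - x0 l / etad + u2 l * D * xlo"
      unfolding restr_feas_def relax_feas_def Let_def D_def by auto
    have LB: "Lam l \<ge> B" if l: "l \<in> {1..k}" for l
    proof (cases "l = k")
      case True then show ?thesis using R B0 by simp
    next
      case False
      then have l1: "l \<in> {1..<k}" "l \<in> {1..K-1}" "l \<in> {1..K}" using l k by auto
      have "x0 l / etad \<le> xhi / etad" using hx l1 a1 by (simp add: divide_right_mono)
      moreover have "u2 l * D * xlo \<ge> D * xlo"
      proof -
        have "u2 l = 0 \<or> u2 l = 1" using R(3) l1 by auto
        then show ?thesis using Dxlo by auto
      qed
      ultimately show ?thesis using R(4) l1 unfolding B_def by force
    qed
    have "(\<Sum>l=1..k. B) \<le> (\<Sum>l=1..k. Lam l)" using LB by (intro sum_mono) auto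
    then have "dt * (real k * B) \<le> dt * (\<Sum>l=1..k. Lam l)" using dt by simp
    moreover have "gamma * lam \<ge> 0" using ga R by simp
    ultimately show "y0 + dt * (real k * B) \<le> x" unfolding x soc_obj_def by linarith
  qed
qed

lemma perk:
  fixes K k :: nat and dt xlo xhi etac etad y0 gamma :: real
    and x0 xd :: "nat \<Rightarrow> real"
  assumes a1: "xlo \<le> 0" "0 \<le> xhi" "0 < etac" "etac < 1" "0 < etad" "etad < 1"
    and dt: "dt > 0" and ga: "gamma \<ge> 0"
    and hxd: "\<forall>k\<in>{1..K}. xd k \<ge> 0"
    and hx: "\<forall>k\<in>{1..K}. x0 k \<le> xhi \<and> x0 k - xd k \<ge> xlo"
    and k: "k \<in> {1..K}"
  shows "Y_restr K dt xlo xhi etac etad y0 gamma x0 xd k \<le> Y_relax K dt xlo xhi etac etad y0 gamma x0 xd k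
     + (real K * dt - dt) * delta_eta etac etad * min (- xlo) (min xhi ((xhi - xlo) / (1 + etac * etad)))"
    (is "?Y \<le> _ + ?C")
proof -
  have "?Y - ?C \<le> Inf {soc_obj dt y0 gamma k lam Lam | lam Lam u1 u2.
            relax_feas K xlo xhi etac etad x0 xd k lam Lam u1 u2}"
  proof (rule cInf_greatest)
    show "{soc_obj dt y0 gamma k lam Lam | lam Lam u1 u2.
            relax_feas K xlo xhi etac etad x0 xd k lam Lam u1 u2} \<noteq> {}"
      using relax_nonempty[OF a1(1,2) hxd hx, of etac etad k] by blast
  next
    fix x assume "x \<in> {soc_obj dt y0 gamma k lam Lam | lam Lam u1 u2.
            relax_feas K xlo xhi etac etad x0 xd k lam Lam u1 u2}"
    then obtain lam Lam u1 u2 where x: "x = soc_obj dt y0 gamma k lam Lam"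
      and rf: "relax_feas K xlo xhi etac etad x0 xd k lam Lam u1 u2" by blast
    obtain lam' Lam' u3 where rs: "restr_feas K xlo xhi etac etad x0 xd k lam' Lam' u1 u2 u3"
      and ob: "soc_obj dt y0 gamma k lam' Lam' \<le> soc_obj dt y0 gamma k lam Lam + ?C"
      using step[OF a1 dt ga hxd hx k rf refl, where yy=y0] by (auto simp: mult.assoc)
    have "?Y \<le> soc_obj dt y0 gamma k lam' Lam'"
      unfolding Y_restr_def
      by (rule cInf_lower) (use rs restr_bdd[OF a1 dt ga hx k, of y0] in blast)+
    then show "?Y - ?C \<le> x" using ob x by linarith
  qed
  then show ?thesis unfolding Y_relax_def by linarith
qed

theorem proposition10:
  fixes K :: nat and dt xlo xhi etac etad y0 gamma :: real
    and x0 xd :: "nat \<Rightarrow> real"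
  assumes "K > 0" and "dt > 0" and "xlo \<le> 0" and "0 \<le> xhi"
    and "0 < etac" and "etac < 1" and "0 < etad" and "etad < 1"
    and "y0 \<ge> 0" and "gamma \<ge> 0"
    and "\<forall>k\<in>{1..K}. xd k \<ge> 0"
    and "\<forall>k\<in>{1..K}. x0 k \<le> xhi \<and> x0 k - xd k \<ge> xlo"
  shows "(MAX k\<in>{1..K}. Y_restr K dt xlo xhi etac etad y0 gamma x0 xd k)
         - (MAX k\<in>{1..K}. Y_relax K dt xlo xhi etac etad y0 gamma x0 xd k)
         \<le> (real K * dt - dt) * delta_eta etac etad
             * min (- xlo) (min xhi ((xhi - xlo) / (1 + etac * etad)))"
proof -
  let ?f = "\<lambda>k. Y_restr K dt xlo xhi etac etad y0 gamma x0 xd k"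
  let ?g = "\<lambda>k. Y_relax K dt xlo xhi etac etad y0 gamma x0 xd k"
  let ?C = "(real K * dt - dt) * delta_eta etac etad
             * min (- xlo) (min xhi ((xhi - xlo) / (1 + etac * etad)))"
  have ne: "{1..K} \<noteq> {}" using assms(1) by auto
  have "(MAX k\<in>{1..K}. ?f k) \<in> ?f ` {1..K}" using ne by (intro Max_in) auto
  then obtain k0 where k0: "k0 \<in> {1..K}" "(MAX k\<in>{1..K}. ?f k) = ?f k0" by auto
  have "?f k0 \<le> ?g k0 + ?C"
    using perk[OF assms(3,4,5,6,7,8,2,10,11,12) k0(1)] .
  moreover have "?g k0 \<le> (MAX k\<in>{1..K}. ?g k)" using k0(1) by (intro Max_ge) auto
  ultimately show ?thesis using k0(2) by linarith
qed
end
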